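(* Let $\mathbb{D}^n\subseteq\mathbb{R}^n$ and $\mathbb{D}^m\subseteq\mathbb{R}^m$ be unbounded sets and let $f:\mathbb{D}^n\to\mathbb{D}^m$ be surjective. Let $g:\mathbb{D}^n\to\mathbb{D}^m$ be any neural network, i.e. $g=\omega\circ h_k\circ\cdots\circ h_1\circ\iota$ with a linear input layer $\iota:\mathbb{D}^n\to\mathbb{D}^{p_1}$, finitely many hidden layers $h_1,\dots,h_k$ ($h_j:\mathbb{D}^{p_j}\to\mathbb{D}^{q_j}$, the co-domain of each $h_j$ equal to the domain of $h_{j+1}$), and a linear output layer $\omega:\mathbb{D}^{q_k}\to\mathbb{D}^m$, such that $g$ has an activation bottleneck located in some hidden layer $h_i$ (the image of $h_i$ is bounded) and all layers after $h_i$ (namely $h_{i+1},\dots,h_k$ and $\omega$) are Lipschitz continuous. Then the maximum approximation error satisfies $$\varepsilon^\star_{f,g}=\sup\{\varepsilon\in\mathbb{R}^+:\exists x\in\mathbb{D}^n:\ \|f(x)-g(x)\|\ge\varepsilon\}=\infty.$$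
   Context: For each natural number $d$, $\mathbb{D}^d$ denotes a subset of $\mathbb{R}^d$; $\|\cdot\|$ is the Euclidean norm on $\mathbb{R}^m$. A hidden layer is a function $h:\mathbb{D}^p\to\mathbb{D}^q$ for natural numbers $p,q$. A neural network has an activation bottleneck if at least one of its hidden layers has bounded image; the bottleneck is said to be located in that layer. The quantity $\varepsilon^\star_{f,g}$ is called the maximum approximation error of $g$ on $f$. *)

theory Defs
  imports Complex_Main "HOL-Library.Extended_Real"
begin

text \<open>Vectors of R^d are represented as real lists of length d.\<close>

definition eucl_norm :: "real list \<Rightarrow> real" where
  "eucl_norm xs = sqrt (\<Sum>t\<leftarrow>xs. t\<^sup>2)"

definition eucl_dist :: "real list \<Rightarrow> real list \<Rightarrow> real" where
  "eucl_dist xs ys = eucl_norm (map2 (-) xs ys)"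

definition bounded_set :: "real list set \<Rightarrow> bool" where
  "bounded_set S \<longleftrightarrow> (\<exists>B. \<forall>x\<in>S. eucl_norm x \<le> B)"

definition lipschitz_on_set :: "real list set \<Rightarrow> (real list \<Rightarrow> real list) \<Rightarrow> bool" where
  "lipschitz_on_set S h \<longleftrightarrow> (\<exists>L. \<forall>x\<in>S. \<forall>y\<in>S. eucl_dist (h x) (h y) \<le> L * eucl_dist x y)"

definition linear_layer :: "nat \<Rightarrow> nat \<Rightarrow> (real list \<Rightarrow> real list) \<Rightarrow> bool" where
  "linear_layer a b \<phi> \<longleftrightarrow> (\<exists>W :: nat \<Rightarrow> nat \<Rightarrow> real.
      \<forall>x. length x = a \<longrightarrow> \<phi> x = map (\<lambda>j. \<Sum>i<a. W j i * x ! i) [0..<b])"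

text \<open>Composition h_k o ... o h_1 of the list of hidden layers [h_1,...,h_k].\<close>
definition compose_layers :: "(real list \<Rightarrow> real list) list \<Rightarrow> real list \<Rightarrow> real list" where
  "compose_layers hs x = fold (\<lambda>h y. h y) hs x"

definition max_approx_error ::
  "real list set \<Rightarrow> (real list \<Rightarrow> real list) \<Rightarrow> (real list \<Rightarrow> real list) \<Rightarrow> ereal" where
  "max_approx_error Dn f g =
     Sup (ereal ` {\<epsilon>::real. \<epsilon> > 0 \<and> (\<exists>x\<in>Dn. eucl_dist (f x) (g x) \<ge> \<epsilon>)})"

end

theory Submission
  imports Defs "HOL-Analysis.L2_Norm"
begin

lemma norm_L2: "eucl_norm x = L2_set (\<lambda>i. x ! i) {..<length x}"
  unfolding eucl_norm_def L2_set_def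
  by (simp add: sum_list_sum_nth atLeast0LessThan[symmetric])

lemma dist_L2: "length x = length y \<Longrightarrow> eucl_dist x y = L2_set (\<lambda>i. x ! i - y ! i) {..<length x}"
  unfolding eucl_dist_def norm_L2 by (auto intro: L2_set_cong)

lemma dist_nonneg: "eucl_dist x y \<ge> 0"
  unfolding eucl_dist_def eucl_norm_def by (intro real_sqrt_ge_zero sum_list_nonneg) auto

lemma dist_tri: "length x = length y \<Longrightarrow> eucl_norm x \<le> eucl_norm y + eucl_dist x y"
proof -
  assume l: "length x = length y"
  have "eucl_norm x = L2_set (\<lambda>i. y ! i + (x ! i - y ! i)) {..<length x}"
    unfolding norm_L2 by simp
  also have "\<dots> \<le> L2_set (\<lambda>i. y ! i) {..<length x} + L2_set (\<lambda>i. x ! i - y ! i) {..<length x}"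
    by (rule L2_set_triangle_ineq)
  also have "\<dots> = eucl_norm y + eucl_dist x y" using l by (simp add: norm_L2 dist_L2)
  finally show ?thesis .
qed

lemma dist_tri2: "length x = length y \<Longrightarrow> eucl_dist x y \<le> eucl_norm x + eucl_norm y"
proof -
  assume l: "length x = length y"
  have "eucl_dist x y = L2_set (\<lambda>i. x ! i + (- y ! i)) {..<length x}"
    using l by (simp add: dist_L2)
  also have "\<dots> \<le> L2_set (\<lambda>i. x ! i) {..<length x} + L2_set (\<lambda>i. - y ! i) {..<length x}"
    by (rule L2_set_triangle_ineq)
  also have "L2_set (\<lambda>i. - y ! i) {..<length x} = L2_set (\<lambda>i. y ! i) {..<length x}"
    unfolding L2_set_def by simp
  also have "L2_set (\<lambda>i. x ! i) {..<length x} + L2_set (\<lambda>i. y ! i) {..<length x} = eucl_norm x + eucl_norm y"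
    using l by (simp add: norm_L2)
  finally show ?thesis .
qed

lemma lip_bounded:
  assumes S: "S \<subseteq> {x. length x = d}" and hS: "h ` S \<subseteq> {x. length x = e}"
    and lip: "lipschitz_on_set S h" and T: "T \<subseteq> S" and bT: "bounded_set T"
  shows "bounded_set (h ` T)"
proof (cases "T = {}")
  case True then show ?thesis by (simp add: bounded_set_def)
next
  case False
  then obtain x0 where x0: "x0 \<in> T" by blast
  obtain L where L: "\<forall>x\<in>S. \<forall>y\<in>S. eucl_dist (h x) (h y) \<le> L * eucl_dist x y"
    using lip unfolding lipschitz_on_set_def by blast
  obtain B where B: "\<forall>x\<in>T. eucl_norm x \<le> B" using bT unfolding bounded_set_def by blast
  have "eucl_norm (h x) \<le> eucl_norm (h x0) + \<bar>L\<bar> * (B + eucl_norm x0)" if x: "x \<in> T" for x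
  proof -
    have lx: "length (h x) = length (h x0)" "length x = length x0" proof -
      have "x \<in> S" "x0 \<in> S" using x x0 T by auto
      then have "h x \<in> h ` S" "h x0 \<in> h ` S" by auto
      then show "length (h x) = length (h x0)" "length x = length x0"
        using hS S \<open>x \<in> S\<close> \<open>x0 \<in> S\<close> by blast+
    qed
    have "eucl_norm (h x) \<le> eucl_norm (h x0) + eucl_dist (h x) (h x0)" by (rule dist_tri[OF lx(1)])
    also have "eucl_dist (h x) (h x0) \<le> L * eucl_dist x x0" using L x x0 T by auto
    also have "L * eucl_dist x x0 \<le> \<bar>L\<bar> * eucl_dist x x0"
      using dist_nonneg[of x x0] by (simp add: mult_right_mono)
    also have "\<dots> \<le> \<bar>L\<bar> * (eucl_norm x + eucl_norm x0)"
      by (rule mult_left_mono[OF dist_tri2[OF lx(2)]]) simp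
    also have "\<dots> \<le> \<bar>L\<bar> * (B + eucl_norm x0)"
      using B x by (intro mult_left_mono) auto
    finally show ?thesis by simp
  qed
  then show ?thesis unfolding bounded_set_def by blast
qed

lemma bounded_subset: "bounded_set T \<Longrightarrow> S \<subseteq> T \<Longrightarrow> bounded_set S"
  unfolding bounded_set_def by blast

lemma compose_Suc: "j < length hs \<Longrightarrow>
  compose_layers (take (Suc j) hs) x = (hs ! j) (compose_layers (take j hs) x)"
  unfolding compose_layers_def by (simp add: take_Suc_conv_app_nth)

theorem theorem4:
  fixes D :: "nat \<Rightarrow> real list set"
    and n m k i :: nat
    and p q :: "nat \<Rightarrow> nat"
    and f \<iota> \<omega> :: "real list \<Rightarrow> real list"
    and hs :: "(real list \<Rightarrow> real list) list"
  assumes D_sub: "\<And>d. D d \<subseteq> {x. length x = d}"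
    and unb_n: "\<not> bounded_set (D n)"
    and unb_m: "\<not> bounded_set (D m)"
    and f_surj: "f ` D n = D m"
    and iota_lin: "linear_layer n (p 0) \<iota>"
    and iota_maps: "\<iota> ` D n \<subseteq> D (p 0)"
    and len_hs: "length hs = k"
    and hs_maps: "\<And>j. j < k \<Longrightarrow> (hs ! j) ` D (p j) \<subseteq> D (q j)"
    and hs_chain: "\<And>j. Suc j < k \<Longrightarrow> q j = p (Suc j)"
    and omega_lin: "linear_layer (q (k - 1)) m \<omega>"
    and omega_maps: "\<omega> ` D (q (k - 1)) \<subseteq> D m"
    and i_lt: "i < k"
    and bottleneck: "bounded_set ((hs ! i) ` D (p i))"
    and lip_after: "\<And>j. i < j \<Longrightarrow> j < k \<Longrightarrow> lipschitz_on_set (D (p j)) (hs ! j)"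
    and lip_omega: "lipschitz_on_set (D (q (k - 1))) \<omega>"
  shows "max_approx_error (D n) f (\<lambda>x. \<omega> (compose_layers hs (\<iota> x))) = \<infinity>"
proof -
  define c where "c j x = compose_layers (take j hs) (\<iota> x)" for j x
  have mem: "\<forall>x\<in>D n. c j x \<in> (if j = 0 then D (p 0) else D (q (j - 1)))" if "j \<le> k" for j
    using that
  proof (induction j)
    case 0
    then show ?case using iota_maps by (auto simp: c_def compose_layers_def)
  next
    case (Suc j)
    have inp: "c j x \<in> D (p j)" if "x \<in> D n" for x
    proof (cases j)
      case 0 then show ?thesis using Suc that by auto
    next
      case (Suc j')
      then show ?thesis using Suc.IH \<open>Suc j \<le> k\<close> that hs_chain[of j'] by auto
    qed
    show ?case using inp hs_maps[of j] Suc.prems len_hs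
      by (auto simp: c_def compose_Suc)
  qed
  have bnd: "bounded_set (c j ` D n)" if "Suc i \<le> j" "j \<le> k" for j
    using that
  proof (induction j)
    case 0 then show ?case by simp
  next
    case (Suc j)
    show ?case
    proof (cases "j = i")
      case True
      have "c (Suc j) ` D n \<subseteq> (hs ! i) ` D (p i)"
      proof
        fix y assume "y \<in> c (Suc j) ` D n"
        then obtain x where x: "x \<in> D n" "y = c (Suc j) x" by blast
        have "c i x \<in> D (p i)"
        proof (cases i)
          case 0 then show ?thesis using mem[of 0] x by auto
        next
          case (Suc i')
          then show ?thesis using mem[of i] x i_lt hs_chain[of i'] by auto
        qed
        then show "y \<in> (hs ! i) ` D (p i)" using x True i_lt len_hs
          by (auto simp: c_def compose_Suc)
      qed
      then show ?thesis using bounded_subset bottleneck by blast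
    next
      case False
      then have ij: "i < j" "j < k" using Suc.prems by auto
      have b: "bounded_set (c j ` D n)" using Suc ij by auto
      have sub: "c j ` D n \<subseteq> D (p j)"
        using mem[of j] ij hs_chain[of "j - 1"] by auto
      have eq: "c (Suc j) ` D n = (hs ! j) ` (c j ` D n)"
        using ij len_hs by (auto simp: c_def compose_Suc image_iff)
      show ?thesis unfolding eq
        by (rule lip_bounded[OF D_sub[of "p j"] _ lip_after[OF ij] sub b])
           (use hs_maps[OF ij(2)] D_sub[of "q j"] in auto)
    qed
  qed
  have bk: "bounded_set (c k ` D n)" using bnd[of k] i_lt by auto
  have subk: "c k ` D n \<subseteq> D (q (k - 1))" using mem[of k] i_lt by auto
  have bg: "bounded_set (\<omega> ` (c k ` D n))"
    by (rule lip_bounded[OF D_sub _ lip_omega subk bk, where e=m]) (use omega_maps D_sub[of m] in \<open>auto simp: image_subset_iff\<close>)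
  then obtain B where B: "\<forall>x\<in>D n. eucl_norm (\<omega> (compose_layers hs (\<iota> x))) \<le> B"
    unfolding bounded_set_def c_def using len_hs by auto
  have gm: "\<omega> (compose_layers hs (\<iota> x)) \<in> D m" if "x \<in> D n" for x
    using subk omega_maps that len_hs by (auto simp: c_def)
  let ?S = "{\<epsilon>::real. \<epsilon> > 0 \<and> (\<exists>x\<in>D n. eucl_dist (f x) (\<omega> (compose_layers hs (\<iota> x))) \<ge> \<epsilon>)}"
  have big: "\<exists>s\<in>?S. s > E" for E
  proof -
    obtain y where y: "y \<in> D m" "eucl_norm y > max E 0 + B + 1"
      using unb_m unfolding bounded_set_def by (meson not_le)
    then obtain x where x: "x \<in> D n" "f x = y" using f_surj by (metis imageE)
    have l: "length (f x) = length (\<omega> (compose_layers hs (\<iota> x)))"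
      using gm[OF x(1)] y(1) x(2) D_sub[of m] by auto
    have "eucl_norm (f x) \<le> eucl_norm (\<omega> (compose_layers hs (\<iota> x))) + eucl_dist (f x) (\<omega> (compose_layers hs (\<iota> x)))"
      by (rule dist_tri[OF l])
    then have "eucl_dist (f x) (\<omega> (compose_layers hs (\<iota> x))) > max E 0"
      using B x y by fastforce
    then show ?thesis using x by (intro bexI[of _ "eucl_dist (f x) (\<omega> (compose_layers hs (\<iota> x)))"]) auto
  qed
  have "Sup (ereal ` ?S) = \<infinity>"
    unfolding Sup_eq_top_iff[where 'a=ereal, unfolded top_ereal_def]
  proof (intro allI impI)
    fix z :: ereal assume "z < \<infinity>"
    obtain s where s: "s \<in> ?S" "s > real_of_ereal z" using big by blast
    have "z < ereal s" using s(2) \<open>z < \<infinity>\<close> by (cases z) auto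
    then show "\<exists>i\<in>ereal ` ?S. z < i" using s(1) by blast
  qed
  then show ?thesis unfolding max_approx_error_def .
qed

end
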